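(* Let $a<b$, let $f\in C([a,b])$ be complex valued, let $g\in C^1([a,b])$ be real valued with $|g'|>0$ on $[a,b]$, and let $p:\mathbb{C}\to\mathbb{C}$ be a polynomial. Then \[ \Big|\int_a^be^{ig(x)}f(x)dx-e^{ig(a)}\sum_{k=0}^{\deg p}i^{k+1}p^{(k)}(g(a))+e^{ig(b)}\sum_{k=0}^{\deg p}i^{k+1}p^{(k)}(g(b))\Big|\le\|f-(p\circ g)g'\|_{L^1(a,b)}. \]
   Context: $p^{(k)}$ denotes the $k$-th derivative of $p$. *)

theory Defs
  imports "HOL-Analysis.Analysis" "HOL-Computational_Algebra.Polynomial"
begin

end

theory Submission
  imports Defs
begin

lemma deg_iter_pderiv: "degree ((pderiv ^^ k) (p::complex poly)) = degree p - k"
  by (induction k) (auto simp: degree_pderiv)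

lemma iter_pderiv_zero: "(pderiv ^^ Suc (degree p)) (p::complex poly) = 0"
proof -
  have "degree ((pderiv ^^ degree p) p) = 0" by (simp add: deg_iter_pderiv)
  then show ?thesis by (simp add: pderiv_eq_0_iff)
qed

lemma S_identity:
  fixes p :: "complex poly" and y :: complex
  shows "\<i> * (\<Sum>k=0..degree p. \<i> ^ (k + 1) * poly ((pderiv ^^ k) p) y)
       + (\<Sum>k=0..degree p. \<i> ^ (k + 1) * poly ((pderiv ^^ Suc k) p) y) = - poly p y"
proof -
  define u where "u k = \<i> ^ k * poly ((pderiv ^^ k) p) y" for k
  have "\<i> * (\<Sum>k=0..degree p. \<i> ^ (k + 1) * poly ((pderiv ^^ k) p) y)
       + (\<Sum>k=0..degree p. \<i> ^ (k + 1) * poly ((pderiv ^^ Suc k) p) y)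
       = (\<Sum>k=0..degree p. u (Suc k) - u k)"
    by (simp add: sum_distrib_left sum.distrib[symmetric] u_def algebra_simps sum_subtractf[symmetric])
  also have "\<dots> = u (Suc (degree p)) - u 0" by (rule sum_Suc_diff) simp
  also have "\<dots> = - poly p y" using iter_pderiv_zero[of p] by (simp add: u_def del: funpow.simps)
  finally show ?thesis .
qed

theorem lemma8p7:
  fixes a b :: real
    and f :: "real \<Rightarrow> complex"
    and g g' :: "real \<Rightarrow> real"
    and p :: "complex poly"
  assumes "a < b"
    and "continuous_on {a..b} f"
    and "\<And>x. x \<in> {a..b} \<Longrightarrow> (g has_real_derivative g' x) (at x within {a..b})"
    and "continuous_on {a..b} g'"
    and "\<And>x. x \<in> {a..b} \<Longrightarrow> \<bar>g' x\<bar> > 0"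
  shows "norm (integral {a..b} (\<lambda>x. exp (\<i> * complex_of_real (g x)) * f x)
           - exp (\<i> * complex_of_real (g a)) *
               (\<Sum>k=0..degree p. \<i> ^ (k + 1) * poly ((pderiv ^^ k) p) (complex_of_real (g a)))
           + exp (\<i> * complex_of_real (g b)) *
               (\<Sum>k=0..degree p. \<i> ^ (k + 1) * poly ((pderiv ^^ k) p) (complex_of_real (g b))))
         \<le> integral {a..b} (\<lambda>x. norm (f x - poly p (complex_of_real (g x)) * complex_of_real (g' x)))"
proof -
  define S where "S z = (\<Sum>k=0..degree p. \<i> ^ (k + 1) * poly ((pderiv ^^ k) p) z)" for z
  define S' where "S' z = (\<Sum>k=0..degree p. \<i> ^ (k + 1) * poly ((pderiv ^^ Suc k) p) z)" for z
  define H where "H z = - exp (\<i> * z) * S z" for z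
  have dS: "(S has_field_derivative S' z) (at z)" for z
    unfolding S_def S'_def
    by (auto intro!: derivative_eq_intros poly_DERIV sum.cong simp: mult_ac)
  have dH: "(H has_field_derivative exp (\<i> * z) * poly p z) (at z)" for z
  proof -
    have "(H has_field_derivative - (exp (\<i> * z) * \<i>) * S z - exp (\<i> * z) * S' z) (at z)"
      unfolding H_def by (auto intro!: derivative_eq_intros dS)
    moreover have "- (exp (\<i> * z) * \<i>) * S z - exp (\<i> * z) * S' z = - exp (\<i> * z) * (\<i> * S z + S' z)"
      by (simp add: algebra_simps)
    moreover have "\<i> * S z + S' z = - poly p z" unfolding S_def S'_def by (rule S_identity)
    ultimately show ?thesis by simp
  qed
  define h where "h x = exp (\<i> * complex_of_real (g x)) * (poly p (complex_of_real (g x)) * complex_of_real (g' x))" for x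
  have dF: "((H \<circ> (\<lambda>x. complex_of_real (g x))) has_vector_derivative h x) (at x within {a..b})"
    if "x \<in> {a..b}" for x
  proof -
    have "((H \<circ> (\<lambda>x. complex_of_real (g x))) has_vector_derivative
          complex_of_real (g' x) * (exp (\<i> * complex_of_real (g x)) * poly p (complex_of_real (g x)))) (at x within {a..b})"
      by (rule field_vector_diff_chain_within[OF has_vector_derivative_of_real[OF assms(3)[OF that]]])
         (rule has_field_derivative_at_within[OF dH])
    then show ?thesis unfolding h_def by (simp add: algebra_simps)
  qed
  have hint: "(h has_integral (H (g b) - H (g a))) {a..b}"
    using fundamental_theorem_of_calculus[OF less_imp_le[OF assms(1)] dF] by simp
  have contg: "continuous_on {a..b} g"
    unfolding continuous_on_eq_continuous_within using DERIV_continuous assms(3) by blast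
  have cont_e: "continuous_on {a..b} (\<lambda>x. exp (\<i> * complex_of_real (g x)))"
    by (auto intro!: continuous_intros contg)
  have int1: "(\<lambda>x. exp (\<i> * complex_of_real (g x)) * f x) integrable_on {a..b}"
    by (rule integrable_continuous_interval) (auto intro!: continuous_intros contg assms(2))
  have cont_d: "continuous_on {a..b} (\<lambda>x. f x - poly p (complex_of_real (g x)) * complex_of_real (g' x))"
    by (auto intro!: continuous_intros contg assms(2) assms(4))
  have int2: "(\<lambda>x. exp (\<i> * complex_of_real (g x)) * (f x - poly p (complex_of_real (g x)) * complex_of_real (g' x))) integrable_on {a..b}"
    by (rule integrable_continuous_interval) (auto intro!: continuous_intros contg cont_d)
  have int3: "(\<lambda>x. norm (f x - poly p (complex_of_real (g x)) * complex_of_real (g' x))) integrable_on {a..b}"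
    by (rule integrable_continuous_interval) (auto intro!: continuous_intros cont_d)
  have eq: "integral {a..b} (\<lambda>x. exp (\<i> * complex_of_real (g x)) * (f x - poly p (complex_of_real (g x)) * complex_of_real (g' x)))
      = integral {a..b} (\<lambda>x. exp (\<i> * complex_of_real (g x)) * f x) - (H (g b) - H (g a))"
  proof -
    have "integral {a..b} (\<lambda>x. exp (\<i> * complex_of_real (g x)) * (f x - poly p (complex_of_real (g x)) * complex_of_real (g' x)))
       = integral {a..b} (\<lambda>x. exp (\<i> * complex_of_real (g x)) * f x - h x)"
      by (simp add: h_def algebra_simps)
    also have "\<dots> = integral {a..b} (\<lambda>x. exp (\<i> * complex_of_real (g x)) * f x) - integral {a..b} h"
      by (rule integral_diff[OF int1 has_integral_integrable[OF hint]])
    also have "integral {a..b} h = H (g b) - H (g a)" using hint by (rule integral_unique)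
    finally show ?thesis .
  qed
  have "norm (integral {a..b} (\<lambda>x. exp (\<i> * complex_of_real (g x)) * (f x - poly p (complex_of_real (g x)) * complex_of_real (g' x))))
     \<le> integral {a..b} (\<lambda>x. norm (f x - poly p (complex_of_real (g x)) * complex_of_real (g' x)))"
    by (rule integral_norm_bound_integral[OF int2 int3]) (simp add: norm_mult)
  then show ?thesis unfolding eq by (simp add: H_def S_def algebra_simps)
qed
end
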